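(* Let $P_n$ ($n\ge1$) and $P$ be Borel probability measures on $C[0,1]$ (with the sup-norm topology). Assume that for every $n$, $P_n$-almost every $f\in C[0,1]$ is convex. If all finite-dimensional distributions of $P_n$ converge weakly to the corresponding finite-dimensional distributions of $P$, then $P_n$ converges weakly to $P$.
   Context: The finite-dimensional distributions of a Borel probability measure $Q$ on $C[0,1]$ are the push-forwards of $Q$ under the maps $f\mapsto(f(t_1),\dots,f(t_k))\in\mathbb R^k$ for $k\ge1$ and $t_1,\dots,t_k\in[0,1]$. *)

theory Defs
  imports "HOL-Analysis.Analysis" "HOL-Probability.Probability"
begin

typedef I01 = "{0..1::real}"
  by auto

instantiation I01 :: metric_space
begin

definition dist_I01 :: "I01 \<Rightarrow> I01 \<Rightarrow> real"
  where "dist_I01 x y = dist (Rep_I01 x) (Rep_I01 y)"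

definition uniformity_I01 :: "(I01 \<times> I01) filter"
  where "uniformity_I01 = (INF e\<in>{0 <..}. principal {(x, y). dist x y < e})"

definition open_I01 :: "I01 set \<Rightarrow> bool"
  where "open_I01 S = (\<forall>x\<in>S. \<forall>\<^sub>F (x', y) in uniformity. x' = x \<longrightarrow> y \<in> S)"

instance
proof
  fix x y z :: I01
  show "(dist x y = 0) = (x = y)"
    by (simp add: dist_I01_def Rep_I01_inject)
  show "dist x y \<le> dist x z + dist y z"
    unfolding dist_I01_def by (rule dist_triangle2)
qed (simp_all add: uniformity_I01_def open_I01_def)

end

text \<open>C[0,1] with the sup-norm: bounded continuous functions on [0,1]
  (every continuous function on the compact interval is bounded).\<close>

type_synonym C01 = "I01 \<Rightarrow>\<^sub>C real"

definition convex_C01 :: "C01 \<Rightarrow> bool"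
  where "convex_C01 f \<longleftrightarrow> convex_on {0..1} (\<lambda>x. apply_bcontfun f (Abs_I01 x))"

definition weak_conv_seq :: "(nat \<Rightarrow> 'a::topological_space measure) \<Rightarrow> 'a measure \<Rightarrow> bool"
  where "weak_conv_seq Ms M \<longleftrightarrow>
    (\<forall>g :: 'a \<Rightarrow> real. continuous_on UNIV g \<longrightarrow> bounded (range g) \<longrightarrow>
       (\<lambda>n. integral\<^sup>L (Ms n) g) \<longlonglongrightarrow> integral\<^sup>L M g)"

text \<open>The vector (f(t_0),...,f(t_{k-1})) in R^k, with R^k realised as the closed
  subspace {x :: nat \<Rightarrow> real. \<forall>i\<ge>k. x i = 0} of the product space (padding with zeros).\<close>

definition fidi_proj :: "nat \<Rightarrow> (nat \<Rightarrow> I01) \<Rightarrow> C01 \<Rightarrow> (nat \<Rightarrow> real)"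
  where "fidi_proj k t f = (\<lambda>i. if i < k then apply_bcontfun f (t i) else 0)"

end

theory Submission
  imports Defs
begin


lemma Rep_I01_range: "0 \<le> Rep_I01 s \<and> Rep_I01 s \<le> 1"
  using Rep_I01[of s] by auto

lemma Abs_I01_inv': "0 \<le> x \<Longrightarrow> x \<le> 1 \<Longrightarrow> Rep_I01 (Abs_I01 x) = x"
  by (simp add: Abs_I01_inverse)

lemma cont_Rep_I01: "continuous_on UNIV Rep_I01"
  unfolding continuous_on_iff dist_I01_def by blast

lemma cont_Abs_I01: "continuous_on {0..1} Abs_I01"
  unfolding continuous_on_iff dist_I01_def
  by (metis Abs_I01_inv' atLeastAtMost_iff)

lemma compact_I01: "compact (UNIV :: I01 set)"
proof -
  have "UNIV = Abs_I01 ` {0..1}"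
    by (metis Rep_I01 Rep_I01_inverse image_eqI subsetI subset_antisym top_greatest)
  then show ?thesis using compact_continuous_image[OF cont_Abs_I01] by simp
qed

definition hatf :: "nat \<Rightarrow> nat \<Rightarrow> real \<Rightarrow> real" where
  "hatf m i u = max 0 (1 - \<bar>real m * u - real i\<bar>)"

lemma hatf_sum:
  assumes "j < m" "real j \<le> real m * u" "real m * u \<le> real j + 1"
  shows "(\<Sum>i\<le>m. x i * hatf m i u) = x j * (1 - (real m * u - j)) + x (Suc j) * (real m * u - j)"
proof -
  have "(\<Sum>i\<in>{j, Suc j}. x i * hatf m i u) = (\<Sum>i\<le>m. x i * hatf m i u)"
  proof (rule sum.mono_neutral_left)
    show "{j, Suc j} \<subseteq> {..m}" using assms by auto
    show "\<forall>i\<in>{..m} - {j, Suc j}. x i * hatf m i u = 0"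
    proof
      fix i assume "i \<in> {..m} - {j, Suc j}"
      then have "i < j \<or> i > Suc j" by auto
      then have "real i + 1 \<le> real j \<or> real i \<ge> real j + 2" by auto
      then have "\<bar>real m * u - real i\<bar> \<ge> 1" using assms by auto
      then show "x i * hatf m i u = 0" by (simp add: hatf_def)
    qed
  qed auto
  then have "(\<Sum>i\<le>m. x i * hatf m i u) = (\<Sum>i\<in>{j, Suc j}. x i * hatf m i u)" by simp
  also have "\<dots> = x j * hatf m j u + x (Suc j) * hatf m (Suc j) u" by simp
  also have "hatf m j u = 1 - (real m * u - j)" using assms by (simp add: hatf_def)
  also have "hatf m (Suc j) u = real m * u - j" using assms by (simp add: hatf_def)
  finally show ?thesis .
qed

lemma hatf_cell:
  assumes "m \<ge> 1" "0 \<le> u" "u \<le> 1"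
  obtains j where "j < m" "real j \<le> real m * u" "real m * u \<le> real j + 1"
proof (cases "u = 1")
  case True
  then show ?thesis using that[of "m - 1"] assms by (simp add: of_nat_diff)
next
  case False
  define j where "j = nat \<lfloor>real m * u\<rfloor>"
  have mu: "0 \<le> real m * u" "real m * u < real m" using assms False by auto
  have "real j \<le> real m * u" "real m * u \<le> real j + 1" using mu unfolding j_def by linarith+
  moreover have "j < m" using mu unfolding j_def by linarith
  ultimately show ?thesis using that by blast
qed

lemma hatf_nonneg: "hatf m i u \<ge> 0" by (simp add: hatf_def)

lemma hatf_unity: assumes "m \<ge> 1" "0 \<le> u" "u \<le> 1" shows "(\<Sum>i\<le>m. hatf m i u) = 1"
proof -
  obtain j where "j < m" "real j \<le> real m * u" "real m * u \<le> real j + 1" using hatf_cell assms by blast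
  from hatf_sum[OF this, of "\<lambda>_. 1"] show ?thesis by simp
qed

lemma hatf_supp: "hatf m i u \<noteq> 0 \<Longrightarrow> \<bar>real m * u - real i\<bar> < 1"
  by (auto simp: hatf_def)



definition grid :: "nat \<Rightarrow> nat \<Rightarrow> I01" where
  "grid m j = Abs_I01 (real j / real m)"

lemma Rep_grid: "j \<le> m \<Longrightarrow> Rep_I01 (grid m j) = real j / real m"
  unfolding grid_def by (rule Abs_I01_inv') (auto simp: divide_le_eq_1)

lemma hat_bc: "(\<lambda>s. hatf m i (Rep_I01 s)) \<in> bcontfun"
proof (rule bcontfun_normI)
  show "continuous_on UNIV (\<lambda>s. hatf m i (Rep_I01 s))"
    unfolding hatf_def by (intro continuous_intros cont_Rep_I01)
  show "norm (hatf m i (Rep_I01 s)) \<le> 1" for s by (auto simp: hatf_def)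
qed

definition hat :: "nat \<Rightarrow> nat \<Rightarrow> C01" where
  "hat m i = Bcontfun (\<lambda>s. hatf m i (Rep_I01 s))"

lemma hat_apply[simp]: "apply_bcontfun (hat m i) s = hatf m i (Rep_I01 s)"
  unfolding hat_def using hat_bc by (simp add: Bcontfun_inverse)

lemma apply_sum_bcontfun: "apply_bcontfun (\<Sum>i\<in>A. (F i :: C01)) s = (\<Sum>i\<in>A. apply_bcontfun (F i) s)"
  by (induction A rule: infinite_finite_induct) auto

definition Interp :: "nat \<Rightarrow> (nat \<Rightarrow> real) \<Rightarrow> C01" where
  "Interp m x = (\<Sum>i\<le>m. x i *\<^sub>R hat m i)"

lemma Interp_apply: "apply_bcontfun (Interp m x) s = (\<Sum>i\<le>m. x i * hatf m i (Rep_I01 s))"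
  unfolding Interp_def apply_sum_bcontfun by simp

lemma cont_Interp: "continuous_on UNIV (Interp m)"
  unfolding Interp_def by (intro continuous_intros continuous_on_product_coordinates)

primrec dmax :: "nat \<Rightarrow> (nat \<Rightarrow> real) \<Rightarrow> real" where
  "dmax 0 x = 0"
| "dmax (Suc k) x = max (dmax k x) \<bar>x k - 2 * x (Suc k) + x (Suc (Suc k))\<bar>"

lemma cont_dmax: "continuous_on UNIV (dmax k)"
  by (induction k) (auto intro!: continuous_intros continuous_on_product_coordinates)

lemma dmax_ge: "j < k \<Longrightarrow> \<bar>x j - 2 * x (Suc j) + x (Suc (Suc j))\<bar> \<le> dmax k x"
  by (induction k) (auto simp: less_Suc_eq)

lemma dmax_nonneg: "0 \<le> dmax k x"
  by (induction k) auto

lemma dmax_le: "(\<And>j. j < k \<Longrightarrow> \<bar>x j - 2 * x (Suc j) + x (Suc (Suc j))\<bar> \<le> c) \<Longrightarrow> 0 \<le> c \<Longrightarrow> dmax k x \<le> c"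
  by (induction k) auto

definition Y :: "nat \<Rightarrow> C01 \<Rightarrow> (nat \<Rightarrow> real)" where
  "Y m f = fidi_proj (Suc m) (grid m) f"

lemma Y_apply: "i \<le> m \<Longrightarrow> Y m f i = apply_bcontfun f (grid m i)"
  by (simp add: Y_def fidi_proj_def)

lemma cont_eval: "continuous_on UNIV (\<lambda>f::C01. apply_bcontfun f s)"
  unfolding continuous_on_iff
  by (metis dist_bounded le_less_trans)

lemma cont_fidi: "continuous_on UNIV (fidi_proj k t)"
  unfolding fidi_proj_def
  apply (intro continuous_on_coordinatewise_then_product)
  subgoal for i by (cases "i < k") (simp_all add: cont_eval)
  done

definition Lm :: "nat \<Rightarrow> C01 \<Rightarrow> C01" where
  "Lm m f = Interp m (Y m f)"

lemma Lm_apply: "apply_bcontfun (Lm m f) s = (\<Sum>i\<le>m. apply_bcontfun f (grid m i) * hatf m i (Rep_I01 s))"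
  unfolding Lm_def Interp_apply by (simp add: Y_apply)

lemma cont_Lm: "continuous_on UNIV (Lm m)"
  unfolding Lm_def Y_def
  by (rule continuous_on_compose[OF cont_fidi, unfolded o_def, THEN continuous_on_subset]) (auto intro: continuous_on_subset[OF cont_Interp])



lemma unif_I01:
  fixes f :: C01
  assumes "e > 0"
  obtains d where "d > 0" "\<And>x x'. dist x' x < d \<Longrightarrow> dist (apply_bcontfun f x') (apply_bcontfun f x) < e"
proof -
  have "uniformly_continuous_on UNIV (apply_bcontfun f)"
    by (rule compact_uniformly_continuous[OF _ compact_I01]) simp
  then show ?thesis using assms that unfolding uniformly_continuous_on_def by blast
qed

lemma grid_close:
  assumes "hatf m i (Rep_I01 s) \<noteq> 0" "i \<le> m" "m \<ge> 1"
  shows "dist (grid m i) s < 1 / real m"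
proof -
  have "\<bar>real m * Rep_I01 s - real i\<bar> < 1" using hatf_supp[OF assms(1)] .
  moreover have "\<bar>real i / real m - Rep_I01 s\<bar> = \<bar>real m * Rep_I01 s - real i\<bar> / real m"
  proof -
    have "real i / real m - Rep_I01 s = - (real m * Rep_I01 s - real i) / real m"
      using assms(3) by (simp add: field_simps)
    then show ?thesis by (simp only: abs_divide abs_minus_cancel)
  qed
  ultimately have "\<bar>real i / real m - Rep_I01 s\<bar> < 1 / real m"
    using assms(3) by (simp add: divide_strict_right_mono)
  then show ?thesis using Rep_grid[OF assms(2)] by (simp add: dist_I01_def dist_real_def)
qed

lemma Lm_close:
  fixes f :: C01
  assumes "e > 0"
  shows "\<exists>N. \<forall>m\<ge>N. \<forall>s. \<bar>apply_bcontfun f s - apply_bcontfun (Lm m f) s\<bar> \<le> e"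
proof -
  obtain d where d: "d > 0" "\<And>x x'. dist x' x < d \<Longrightarrow> dist (apply_bcontfun f x') (apply_bcontfun f x) < e"
    using unif_I01[OF assms] by blast
  obtain N :: nat where N: "real N > 1 / d" using reals_Archimedean2 by blast
  have N1: "N \<ge> 1" using N d by (cases N) auto
  have Np: "real N > 0" using N1 by simp
  have Nd: "1 / real N < d"
  proof -
    have "1 < d * real N" using N d by (simp add: field_simps)
    then show ?thesis using Np by (simp add: field_simps)
  qed
  have "\<forall>s. \<bar>apply_bcontfun f s - apply_bcontfun (Lm m f) s\<bar> \<le> e" if m: "m \<ge> N" for m
  proof
    fix s
    let ?r = "Rep_I01 s"
    have m1: "m \<ge> 1" using m N1 by simp
    have "1 / real m \<le> 1 / real N" using m N1 by (simp add: frac_le)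
    also have "\<dots> < d" using Nd .
    finally have md: "1 / real m < d" .
    have "apply_bcontfun f s = (\<Sum>i\<le>m. apply_bcontfun f s * hatf m i ?r)"
      using hatf_unity[OF m1, of ?r] Rep_I01_range[of s] by (simp flip: sum_distrib_left)
    then have "apply_bcontfun f s - apply_bcontfun (Lm m f) s
        = (\<Sum>i\<le>m. (apply_bcontfun f s - apply_bcontfun f (grid m i)) * hatf m i ?r)"
      by (simp add: Lm_apply sum_subtractf left_diff_distrib)
    also have "\<bar>\<dots>\<bar> \<le> (\<Sum>i\<le>m. \<bar>(apply_bcontfun f s - apply_bcontfun f (grid m i)) * hatf m i ?r\<bar>)"
      by (rule sum_abs)
    also have "\<dots> \<le> (\<Sum>i\<le>m. e * hatf m i ?r)"
    proof (rule sum_mono)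
      fix i assume i: "i \<in> {..m}"
      show "\<bar>(apply_bcontfun f s - apply_bcontfun f (grid m i)) * hatf m i ?r\<bar> \<le> e * hatf m i ?r"
      proof (cases "hatf m i ?r = 0")
        case False
        have "dist (grid m i) s < d" using grid_close[OF False _ m1] i md by auto
        then have "\<bar>apply_bcontfun f s - apply_bcontfun f (grid m i)\<bar> < e"
          using d(2)[of "grid m i" s] by (simp add: dist_real_def abs_minus_commute)
        then show ?thesis using hatf_nonneg[of m i ?r]
          by (simp add: abs_mult mult_right_mono)
      qed simp
    qed
    also have "\<dots> = e" using hatf_unity[OF m1, of ?r] Rep_I01_range[of s] by (simp flip: sum_distrib_left)
    finally show "\<bar>apply_bcontfun f s - apply_bcontfun (Lm m f) s\<bar> \<le> e" .
  qed
  then show ?thesis by blast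
qed

lemma Lm_conv: "(\<lambda>m. Lm m f) \<longlonglongrightarrow> f"
proof (rule LIMSEQ_I)
  fix r :: real assume r: "r > 0"
  obtain N where N: "\<forall>m\<ge>N. \<forall>s. \<bar>apply_bcontfun f s - apply_bcontfun (Lm m f) s\<bar> \<le> r / 2"
    using Lm_close[of "r/2" f] r by auto
  have "norm (Lm m f - f) < r" if "m \<ge> N" for m
  proof -
    have "norm (Lm m f - f) \<le> r / 2"
      using N that by (intro norm_bound) (simp add: abs_minus_commute)
    then show ?thesis using r by simp
  qed
  then show "\<exists>no. \<forall>m\<ge>no. norm (Lm m f - f) < r" by blast
qed

lemma E_close:
  fixes f :: C01
  assumes "e > 0"
  shows "\<exists>N. \<forall>m\<ge>N. dmax (m - 1) (Y m f) \<le> 2 * e"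
proof -
  obtain d where d: "d > 0" "\<And>x x'. dist x' x < d \<Longrightarrow> dist (apply_bcontfun f x') (apply_bcontfun f x) < e"
    using unif_I01[OF assms] by blast
  obtain N :: nat where N: "real N > 1 / d" using reals_Archimedean2 by blast
  have N1: "N \<ge> 1" using N d by (cases N) auto
  have Np: "real N > 0" using N1 by simp
  have Nd: "1 / real N < d"
  proof -
    have "1 < d * real N" using N d by (simp add: field_simps)
    then show ?thesis using Np by (simp add: field_simps)
  qed
  have "dmax (m - 1) (Y m f) \<le> 2 * e" if m: "m \<ge> N" for m
  proof (rule dmax_le)
    have m1: "m \<ge> 1" using m N1 by simp
    have "1 / real m \<le> 1 / real N" using m N1 by (simp add: frac_le)
    also have "\<dots> < d" using Nd .
    finally have md: "1 / real m < d" .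
    have step: "\<bar>Y m f (Suc j) - Y m f j\<bar> < e" if j: "Suc j \<le> m" for j
    proof -
      have "dist (grid m (Suc j)) (grid m j) = \<bar>real (Suc j) / real m - real j / real m\<bar>"
        using Rep_grid[of "Suc j" m] Rep_grid[of j m] j by (simp add: dist_I01_def dist_real_def)
      also have "\<dots> = 1 / real m" using m1 by (simp add: field_simps)
      finally have "dist (grid m (Suc j)) (grid m j) < d" using md by simp
      then show ?thesis using d(2) j by (simp add: Y_apply dist_real_def)
    qed
    fix j assume "j < m - 1"
    then have "Suc (Suc j) \<le> m" by simp
    then have "\<bar>Y m f (Suc (Suc j)) - Y m f (Suc j)\<bar> < e" "\<bar>Y m f (Suc j) - Y m f j\<bar> < e"
      using step by auto
    then show "\<bar>Y m f j - 2 * Y m f (Suc j) + Y m f (Suc (Suc j))\<bar> \<le> 2 * e" by linarith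
  next
    show "0 \<le> 2 * e" using assms by simp
  qed
  then show ?thesis by blast
qed

lemma E_conv: "(\<lambda>m. dmax (m - 1) (Y m f)) \<longlonglongrightarrow> 0"
proof (rule LIMSEQ_I)
  fix r :: real assume r: "r > 0"
  obtain N where N: "\<forall>m\<ge>N. dmax (m - 1) (Y m f) \<le> 2 * (r / 4)"
    using E_close[of "r/4" f] r by auto
  have "norm (dmax (m - 1) (Y m f) - 0) < r" if "m \<ge> N" for m
    using N that r dmax_nonneg[of "m - 1" "Y m f"] by auto
  then show "\<exists>no. \<forall>m\<ge>no. norm (dmax (m - 1) (Y m f) - 0) < r" by blast
qed



lemma comb1r: "(2::real) - th > 0 \<Longrightarrow> (m::real) > 0 \<Longrightarrow> (j + 1) / m = (1 - (1 - th)/(2-th)) * ((j + th)/m) + ((1 - th)/(2-th)) * ((j+2)/m)"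
proof -
  assume a: "(2::real) - th > 0" "(m::real) > 0"
  have e1: "1 - (1 - th)/(2-th) = 1/(2-th)" using a by (simp add: field_simps)
  have "(1 - (1 - th)/(2-th)) * ((j + th)/m) + ((1 - th)/(2-th)) * ((j+2)/m) = (j+th) / ((2-th)*m) + ((1-th)*(j+2)) / ((2-th)*m)"
    unfolding e1 by simp
  also have "\<dots> = ((j+th) + (1-th)*(j+2)) / ((2-th)*m)" by (rule add_divide_distrib[symmetric])
  also have "(j+th) + (1-th)*(j+2) = (j+1)*(2-th)" by (simp add: algebra_simps)
  also have "(j+1)*(2-th) / ((2-th)*m) = (j+1)/m" using a by simp
  finally show ?thesis by simp
qed

lemma comb2r: "(1::real) + th > 0 \<Longrightarrow> (m::real) > 0 \<Longrightarrow> j / m = (1 - th/(1+th)) * ((j + th)/m) + (th/(1+th)) * ((j - 1)/m)"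
proof -
  assume a: "(1::real) + th > 0" "(m::real) > 0"
  have e1: "1 - th/(1+th) = 1/(1+th)" using a by (simp add: field_simps)
  have "(1 - th/(1+th)) * ((j + th)/m) + (th/(1+th)) * ((j - 1)/m) = (j+th) / ((1+th)*m) + (th*(j-1)) / ((1+th)*m)"
    unfolding e1 by simp
  also have "\<dots> = ((j+th) + th*(j-1)) / ((1+th)*m)" by (rule add_divide_distrib[symmetric])
  also have "(j+th) + th*(j-1) = j*(1+th)" by (simp add: algebra_simps)
  also have "j*(1+th) / ((1+th)*m) = j/m" using a by simp
  finally show ?thesis by simp
qed

lemma comb1: "(2::real) - th > 0 \<Longrightarrow> (m::real) > 0 \<Longrightarrow> real (Suc j) / m = (1 - (1 - th)/(2-th)) *\<^sub>R ((real j + th)/m) + ((1 - th)/(2-th)) *\<^sub>R (real (Suc (Suc j))/m)"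
  using comb1r[of th m "real j"] by (simp add: add.commute)

lemma comb2: "(1::real) + th > 0 \<Longrightarrow> (m::real) > 0 \<Longrightarrow> j \<ge> 1 \<Longrightarrow> real j / m = (1 - th/(1+th)) *\<^sub>R ((real j + th)/m) + (th/(1+th)) *\<^sub>R (real (j - 1)/m)"
  using comb2r[of th m "real j"] by (simp add: of_nat_diff)

lemma convex_bound:
  fixes f :: C01
  assumes cf: "convex_C01 f" and m2: "m \<ge> 2"
  shows "\<bar>apply_bcontfun f s - apply_bcontfun (Lm m f) s\<bar> \<le> dmax (m - 1) (Y m f)"
proof -
  define F where "F v = apply_bcontfun f (Abs_I01 v)" for v
  have cF: "convex_on {0..1} F" using cf unfolding convex_C01_def F_def .
  have mpos: "real m > 0" using m2 by simp
  define r where "r = Rep_I01 s"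
  have r01: "0 \<le> r" "r \<le> 1" using Rep_I01_range[of s] unfolding r_def by auto
  have Fr: "F r = apply_bcontfun f s" unfolding F_def r_def by (simp add: Rep_I01_inverse)
  have Yg: "Y m f i = F (real i / real m)" if "i \<le> m" for i
    using that by (simp add: Y_apply F_def grid_def)
  have gin: "real i / real m \<in> {0..1}" if "i \<le> m" for i
    using that mpos by (auto simp: divide_le_eq_1)
  obtain j where j: "j < m" "real j \<le> real m * r" "real m * r \<le> real j + 1"
    using hatf_cell[of m r] m2 r01 by auto
  define \<theta> where "\<theta> = real m * r - real j"
  have th: "0 \<le> \<theta>" "\<theta> \<le> 1" using j unfolding \<theta>_def by auto
  have rj: "r = (real j + \<theta>) / real m" unfolding \<theta>_def using mpos by (simp add: field_simps)
  define F0 where "F0 = F (real j / real m)"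
  define F1 where "F1 = F (real (Suc j) / real m)"
  have L: "apply_bcontfun (Lm m f) s = F0 * (1 - \<theta>) + F1 * \<theta>"
    unfolding Lm_def Interp_apply r_def[symmetric]
    using hatf_sum[OF j, of "Y m f"] j Yg[of j] Yg[of "Suc j"]
    unfolding \<theta>_def F0_def F1_def by simp
  have rc: "r = (1 - \<theta>) *\<^sub>R (real j / real m) + \<theta> *\<^sub>R (real (Suc j) / real m)"
    unfolding \<theta>_def using mpos by (simp add: field_simps)
  have up: "F r \<le> (1 - \<theta>) * F0 + \<theta> * F1"
  proof -
    have g0: "real j / real m \<in> {0..1}" "real (Suc j) / real m \<in> {0..1}" using gin j by auto
    show ?thesis unfolding F0_def F1_def
      by (subst rc) (rule convex_onD[OF cF th g0])
  qed
  have low: "F0 * (1 - \<theta>) + F1 * \<theta> - F r \<le> dmax (m - 1) (Y m f)"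
  proof (cases "Suc (Suc j) \<le> m")
    case True
    define F2 where "F2 = F (real (Suc (Suc j)) / real m)"
    define t where "t = (1 - \<theta>) / (2 - \<theta>)"
    have t: "0 \<le> t" "t \<le> 1" using th unfolding t_def by (auto simp: field_simps)
    have c: "real (Suc j) / real m = (1 - t) *\<^sub>R r + t *\<^sub>R (real (Suc (Suc j)) / real m)"
    proof -
      have "2 - \<theta> > 0" using th by simp
      then show ?thesis unfolding t_def rj using mpos by (rule comb1)
    qed
    have "F1 \<le> (1 - t) * F r + t * F2"
    proof -
      have g: "r \<in> {0..1}" "real (Suc (Suc j)) / real m \<in> {0..1}" using gin True r01 by auto
      show ?thesis unfolding F1_def F2_def by (subst c) (rule convex_onD[OF cF t g])
    qed
    then have "(2 - \<theta>) * F1 \<le> (2 - \<theta>) * ((1 - t) * F r + t * F2)"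
      using th by (intro mult_left_mono) auto
    also have "(2 - \<theta>) * ((1 - t) * F r + t * F2) = ((2 - \<theta>) * (1 - t)) * F r + ((2 - \<theta>) * t) * F2"
      by (simp add: distrib_left mult.assoc)
    also have "\<dots> = F r + (1 - \<theta>) * F2"
    proof -
      have "(2 - \<theta>) * (1 - t) = 1" "(2 - \<theta>) * t = 1 - \<theta>"
        unfolding t_def using th by (simp_all add: field_simps)
      then show ?thesis by simp
    qed
    finally have i1: "(2 - \<theta>) * F1 \<le> F r + (1 - \<theta>) * F2" by simp
    define D where "D = F0 - 2 * F1 + F2"
    have "D = Y m f j - 2 * Y m f (Suc j) + Y m f (Suc (Suc j))"
      unfolding D_def F0_def F1_def F2_def using True by (simp add: Yg)
    also have "\<bar>\<dots>\<bar> \<le> dmax (m - 1) (Y m f)" using True by (intro dmax_ge) simp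
    finally have Dle: "\<bar>D\<bar> \<le> dmax (m - 1) (Y m f)" .
    have "F0 * (1 - \<theta>) + F1 * \<theta> - F r \<le> (1 - \<theta>) * D"
      using i1 unfolding D_def by (simp add: algebra_simps)
    also have "\<dots> \<le> (1 - \<theta>) * \<bar>D\<bar>" using th by (intro mult_left_mono) auto
    also have "\<dots> \<le> \<bar>D\<bar>" using th by (intro mult_left_le_one_le) auto
    finally show ?thesis using Dle by simp
  next
    case False
    then have jm: "Suc j = m" using j by simp
    then have j1: "j \<ge> 1" using m2 by simp
    define Fm where "Fm = F (real (j - 1) / real m)"
    define t where "t = \<theta> / (1 + \<theta>)"
    have t: "0 \<le> t" "t \<le> 1" using th unfolding t_def by (auto simp: field_simps)
    have c: "real j / real m = (1 - t) *\<^sub>R r + t *\<^sub>R (real (j - 1) / real m)"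
    proof -
      have "1 + \<theta> > 0" using th by simp
      then show ?thesis unfolding t_def rj using mpos j1 by (rule comb2)
    qed
    have "F0 \<le> (1 - t) * F r + t * Fm"
    proof -
      have g: "r \<in> {0..1}" "real (j - 1) / real m \<in> {0..1}" using gin j r01 by auto
      show ?thesis unfolding F0_def Fm_def by (subst c) (rule convex_onD[OF cF t g])
    qed
    then have "(1 + \<theta>) * F0 \<le> (1 + \<theta>) * ((1 - t) * F r + t * Fm)"
      using th by (intro mult_left_mono) auto
    also have "(1 + \<theta>) * ((1 - t) * F r + t * Fm) = ((1 + \<theta>) * (1 - t)) * F r + ((1 + \<theta>) * t) * Fm"
      by (simp add: distrib_left mult.assoc)
    also have "\<dots> = F r + (\<theta>) * Fm"
    proof -
      have "(1 + \<theta>) * (1 - t) = 1" "(1 + \<theta>) * t = \<theta>"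
        unfolding t_def using th by (simp_all add: field_simps)
      then show ?thesis by simp
    qed
    finally have i1: "(1 + \<theta>) * F0 \<le> F r + \<theta> * Fm" by simp
    define D where "D = Fm - 2 * F0 + F1"
    have "D = Y m f (j - 1) - 2 * Y m f (Suc (j - 1)) + Y m f (Suc (Suc (j - 1)))"
      unfolding D_def F0_def F1_def Fm_def using j j1 by (simp add: Yg Suc_diff_le)
    also have "\<bar>\<dots>\<bar> \<le> dmax (m - 1) (Y m f)" using j1 jm by (intro dmax_ge) simp
    finally have Dle: "\<bar>D\<bar> \<le> dmax (m - 1) (Y m f)" .
    have "F0 * (1 - \<theta>) + F1 * \<theta> - F r \<le> \<theta> * D"
      using i1 unfolding D_def by (simp add: algebra_simps)
    also have "\<dots> \<le> \<theta> * \<bar>D\<bar>" using th by (intro mult_left_mono) auto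
    also have "\<dots> \<le> \<bar>D\<bar>" using th by (intro mult_left_le_one_le) auto
    finally show ?thesis using Dle by simp
  qed
  show ?thesis using up low L Fr by (simp add: algebra_simps)
qed



locale setup7 =
  fixes Ps :: "nat \<Rightarrow> C01 measure" and P :: "C01 measure"
  assumes Ps_prob: "\<And>n. prob_space (Ps n)"
    and Ps_sets: "\<And>n. sets (Ps n) = sets borel"
    and P_prob: "prob_space P"
    and P_sets: "sets P = sets borel"
    and conv: "\<And>n. AE f in Ps n. convex_C01 f"
    and fidi: "\<And>k t. k \<ge> 1 \<Longrightarrow>
           weak_conv_seq (\<lambda>n. distr (Ps n) borel (fidi_proj k t)) (distr P borel (fidi_proj k t))"
begin

lemma measP: "continuous_on UNIV h \<Longrightarrow> h \<in> borel_measurable P"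
  using borel_measurable_continuous_onI measurable_cong_sets[OF P_sets refl] by blast

lemma measPs: "continuous_on UNIV h \<Longrightarrow> h \<in> borel_measurable (Ps n)"
  using borel_measurable_continuous_onI measurable_cong_sets[OF Ps_sets refl] by blast

lemma measP': "continuous_on UNIV h \<Longrightarrow> h \<in> measurable P borel"
  using borel_measurable_continuous_onI measurable_cong_sets[OF P_sets refl] by blast

lemma measPs': "continuous_on UNIV h \<Longrightarrow> h \<in> measurable (Ps n) borel"
  using borel_measurable_continuous_onI measurable_cong_sets[OF Ps_sets refl] by blast

lemma intP:
  fixes h :: "C01 \<Rightarrow> real"
  assumes "continuous_on UNIV h" "\<And>x. \<bar>h x\<bar> \<le> B"
  shows "integrable P h"
  using prob_space.finite_measure[OF P_prob] assms measP
  by (intro finite_measure.integrable_const_bound[where B=B]) auto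

lemma intPs:
  fixes h :: "C01 \<Rightarrow> real"
  assumes "continuous_on UNIV h" "\<And>x. \<bar>h x\<bar> \<le> B"
  shows "integrable (Ps n) h"
  using prob_space.finite_measure[OF Ps_prob] assms measPs
  by (intro finite_measure.integrable_const_bound[where B=B]) auto

lemma hyp_use:
  fixes G :: "(nat \<Rightarrow> real) \<Rightarrow> real"
  assumes G: "continuous_on UNIV G" "\<And>x. \<bar>G x\<bar> \<le> B" and k: "k \<ge> 1"
  shows "(\<lambda>n. \<integral>f. G (fidi_proj k t f) \<partial>Ps n) \<longlonglongrightarrow> (\<integral>f. G (fidi_proj k t f) \<partial>P)"
proof -
  have bd: "bounded (range G)" using G(2) by (intro boundedI[where B=B]) auto
  have Gm: "G \<in> borel_measurable borel" using G(1) by (rule borel_measurable_continuous_onI)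
  have "(\<lambda>n. integral\<^sup>L (distr (Ps n) borel (fidi_proj k t)) G) \<longlonglongrightarrow> integral\<^sup>L (distr P borel (fidi_proj k t)) G"
    using fidi[OF k, of t] G(1) bd unfolding weak_conv_seq_def by blast
  moreover have "integral\<^sup>L (distr (Ps n) borel (fidi_proj k t)) G = (\<integral>f. G (fidi_proj k t f) \<partial>Ps n)" for n
    by (rule integral_distr[OF measPs'[OF cont_fidi] Gm])
  moreover have "integral\<^sup>L (distr P borel (fidi_proj k t)) G = (\<integral>f. G (fidi_proj k t f) \<partial>P)"
    by (rule integral_distr[OF measP'[OF cont_fidi] Gm])
  ultimately show ?thesis by simp
qed

end



lemma abs4: "\<bar>a - b\<bar> \<le> x \<Longrightarrow> \<bar>c - d\<bar> \<le> y \<Longrightarrow> \<bar>b - c\<bar> < r / 4 \<Longrightarrow> x < z + r / 4 \<Longrightarrow> y < r / 4 \<Longrightarrow> z < r / 4 \<Longrightarrow> \<bar>a - d\<bar> < (r::real)"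
  by linarith

context setup7 begin

lemma lip_case:
  fixes g :: "C01 \<Rightarrow> real"
  assumes gB: "\<And>x. \<bar>g x\<bar> \<le> B" and gK: "\<And>x y. \<bar>g x - g y\<bar> \<le> K * dist x y" and K: "K \<ge> 0"
  shows "(\<lambda>n. integral\<^sup>L (Ps n) g) \<longlonglongrightarrow> integral\<^sup>L P g"
proof -
  have B0: "B \<ge> 0" using gB[of undefined] by linarith
  have gc: "continuous_on UNIV g"
    unfolding continuous_on_iff
  proof (intro ballI allI impI)
    fix x and e :: real assume e: "e > 0"
    show "\<exists>d>0. \<forall>x'\<in>UNIV. dist x' x < d \<longrightarrow> dist (g x') (g x) < e"
    proof (intro exI[of _ "e / (K + 1)"] conjI ballI impI)
      show "e / (K + 1) > 0" using e K by simp
      fix x' assume "dist x' x < e / (K + 1)"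
      then have "(K + 1) * dist x' x < e" using K by (simp add: field_simps)
      moreover have "\<bar>g x' - g x\<bar> \<le> K * dist x' x" by (rule gK)
      moreover have "K * dist x' x \<le> (K + 1) * dist x' x" by (simp add: distrib_right)
      ultimately show "dist (g x') (g x) < e" by (simp add: dist_real_def)
    qed
  qed
  define E where "E m x = min (2 * B) (K * dmax (m - 1) x)" for m x
  have Ec: "continuous_on UNIV (E m)" for m
    unfolding E_def by (intro continuous_intros cont_dmax)
  have EB: "\<bar>E m x\<bar> \<le> 2 * B" for m x
    unfolding E_def using dmax_nonneg[of "m - 1" x] K B0 by auto
  have gLc: "continuous_on UNIV (\<lambda>f. g (Lm m f))" for m
    by (rule continuous_on_compose2[OF gc cont_Lm]) auto
  have gIc: "continuous_on UNIV (\<lambda>x. g (Interp m x))" for m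
    by (rule continuous_on_compose2[OF gc cont_Interp]) auto
  have dc: "continuous_on UNIV (\<lambda>f. \<bar>g f - g (Lm m f)\<bar>)" for m
    by (intro continuous_intros gc gLc)
  have EYc: "continuous_on UNIV (\<lambda>f. E m (Y m f))" for m
    unfolding Y_def by (rule continuous_on_compose2[OF Ec cont_fidi]) auto
  have key: "\<bar>g f - g (Lm m f)\<bar> \<le> E m (Y m f)" if "convex_C01 f" "m \<ge> 2" for f m
  proof -
    have "dist f (Lm m f) \<le> dmax (m - 1) (Y m f)"
      unfolding dist_norm by (intro norm_bound) (use convex_bound[OF that] in simp)
    then have "K * dist f (Lm m f) \<le> K * dmax (m - 1) (Y m f)" using K by (rule mult_left_mono)
    moreover have "\<bar>g f - g (Lm m f)\<bar> \<le> 2 * B" using gB[of f] gB[of "Lm m f"] by linarith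
    ultimately show ?thesis using gK[of f "Lm m f"] unfolding E_def by linarith
  qed
  have F4: "(\<lambda>n. \<integral>f. g (Lm m f) \<partial>Ps n) \<longlonglongrightarrow> (\<integral>f. g (Lm m f) \<partial>P)" for m
    using hyp_use[OF gIc, where B=B and k="Suc m" and t="grid m"] gB unfolding Lm_def Y_def by simp
  have F5: "(\<lambda>n. \<integral>f. E m (Y m f) \<partial>Ps n) \<longlonglongrightarrow> (\<integral>f. E m (Y m f) \<partial>P)" for m
    using hyp_use[OF Ec EB, where k="Suc m" and t="grid m"] unfolding Y_def by simp
  have F6: "(\<lambda>m. \<integral>f. \<bar>g f - g (Lm m f)\<bar> \<partial>P) \<longlonglongrightarrow> (\<integral>f. 0 \<partial>P)"
  proof (rule integral_dominated_convergence[where w="\<lambda>_. 2 * B"])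
    show "(\<lambda>f. 0::real) \<in> borel_measurable P" by simp
    show "(\<lambda>f. \<bar>g f - g (Lm m f)\<bar>) \<in> borel_measurable P" for m by (rule measP[OF dc])
    show "integrable P (\<lambda>_. 2 * B)" using prob_space.finite_measure[OF P_prob]
      by (simp add: finite_measure.integrable_const)
    show "AE f in P. (\<lambda>m. \<bar>g f - g (Lm m f)\<bar>) \<longlonglongrightarrow> 0"
    proof (rule AE_I2)
      fix f
      show "(\<lambda>m. \<bar>g f - g (Lm m f)\<bar>) \<longlonglongrightarrow> 0"
      proof (rule Lim_null_comparison)
        show "\<forall>\<^sub>F m in sequentially. norm \<bar>g f - g (Lm m f)\<bar> \<le> K * dist (Lm m f) f"
        proof (intro always_eventually allI)
          fix m
          have "dist (Lm m f) f = dist f (Lm m f)" by (rule dist_commute)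
          then show "norm \<bar>g f - g (Lm m f)\<bar> \<le> K * dist (Lm m f) f" using gK[of f "Lm m f"] by simp
        qed
        have "(\<lambda>m. dist (Lm m f) f) \<longlonglongrightarrow> 0" by (rule tendsto_dist_iff[THEN iffD1, OF Lm_conv])
        then show "(\<lambda>m. K * dist (Lm m f) f) \<longlonglongrightarrow> 0" by (rule tendsto_mult_right_zero)
      qed
    qed
    show "AE f in P. norm \<bar>g f - g (Lm m f)\<bar> \<le> 2 * B" for m
    proof (rule AE_I2)
      fix f
      show "norm \<bar>g f - g (Lm m f)\<bar> \<le> 2 * B" using gB[of f] gB[of "Lm m f"] by simp
    qed
  qed
  have F7: "(\<lambda>m. \<integral>f. E m (Y m f) \<partial>P) \<longlonglongrightarrow> (\<integral>f. 0 \<partial>P)"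
  proof (rule integral_dominated_convergence[where w="\<lambda>_. 2 * B"])
    show "(\<lambda>f. 0::real) \<in> borel_measurable P" by simp
    show "(\<lambda>f. E m (Y m f)) \<in> borel_measurable P" for m by (rule measP[OF EYc])
    show "integrable P (\<lambda>_. 2 * B)" using prob_space.finite_measure[OF P_prob]
      by (simp add: finite_measure.integrable_const)
    show "AE f in P. (\<lambda>m. E m (Y m f)) \<longlonglongrightarrow> 0"
    proof (rule AE_I2)
      fix f
      show "(\<lambda>m. E m (Y m f)) \<longlonglongrightarrow> 0"
      proof (rule Lim_null_comparison)
        show "\<forall>\<^sub>F m in sequentially. norm (E m (Y m f)) \<le> K * dmax (m - 1) (Y m f)"
          unfolding E_def using dmax_nonneg K B0 by (intro always_eventually allI) auto
        show "(\<lambda>m. K * dmax (m - 1) (Y m f)) \<longlonglongrightarrow> 0" using E_conv by (rule tendsto_mult_right_zero)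
      qed
    qed
    show "AE f in P. norm (E m (Y m f)) \<le> 2 * B" for m
      using EB by (intro AE_I2) simp
  qed
  show ?thesis
  proof (rule LIMSEQ_I)
    fix r :: real assume r: "r > 0"
    define e where "e = r / 4"
    have e: "e > 0" using r unfolding e_def by simp
    obtain M1 where M1: "\<forall>m\<ge>M1. norm ((\<integral>f. \<bar>g f - g (Lm m f)\<bar> \<partial>P) - 0) < e"
      using LIMSEQ_D[OF F6 e] by auto
    obtain M2 where M2: "\<forall>m\<ge>M2. norm ((\<integral>f. E m (Y m f) \<partial>P) - 0) < e"
      using LIMSEQ_D[OF F7 e] by auto
    define m where "m = max (max M1 M2) 2"
    have m2: "m \<ge> 2" unfolding m_def by simp
    have a1: "(\<integral>f. \<bar>g f - g (Lm m f)\<bar> \<partial>P) < e" proof -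
      have "m \<ge> M1" unfolding m_def by simp
      then show ?thesis using M1 by fastforce
    qed
    have a2: "(\<integral>f. E m (Y m f) \<partial>P) < e" proof -
      have "m \<ge> M2" unfolding m_def by simp
      then show ?thesis using M2 by fastforce
    qed
    obtain N1 where N1: "\<forall>n\<ge>N1. norm ((\<integral>f. g (Lm m f) \<partial>Ps n) - (\<integral>f. g (Lm m f) \<partial>P)) < e"
      using LIMSEQ_D[OF F4 e] by auto
    obtain N2 where N2: "\<forall>n\<ge>N2. norm ((\<integral>f. E m (Y m f) \<partial>Ps n) - (\<integral>f. E m (Y m f) \<partial>P)) < e"
      using LIMSEQ_D[OF F5 e] by auto
    have "norm (integral\<^sup>L (Ps n) g - integral\<^sup>L P g) < r" if n: "n \<ge> max N1 N2" for n
    proof -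
      have iPsg: "integrable (Ps n) g" by (rule intPs[OF gc gB])
      have iPg: "integrable P g" by (rule intP[OF gc gB])
      have iPsL: "integrable (Ps n) (\<lambda>f. g (Lm m f))" by (rule intPs[OF gLc gB])
      have iPL: "integrable P (\<lambda>f. g (Lm m f))" by (rule intP[OF gLc gB])
      have iPsE: "integrable (Ps n) (\<lambda>f. E m (Y m f))" by (rule intPs[OF EYc EB])
      have b1: "\<bar>integral\<^sup>L (Ps n) g - (\<integral>f. g (Lm m f) \<partial>Ps n)\<bar> \<le> (\<integral>f. E m (Y m f) \<partial>Ps n)"
      proof -
        have "integral\<^sup>L (Ps n) g - (\<integral>f. g (Lm m f) \<partial>Ps n) = (\<integral>f. g f - g (Lm m f) \<partial>Ps n)"
          using iPsg iPsL by simp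
        also have "\<bar>\<dots>\<bar> \<le> (\<integral>f. \<bar>g f - g (Lm m f)\<bar> \<partial>Ps n)"
          by (rule integral_abs_bound)
        also have "\<dots> \<le> (\<integral>f. E m (Y m f) \<partial>Ps n)"
          by (rule integral_mono_AE) (use iPsg iPsL iPsE conv[of n] key m2 in auto)
        finally show ?thesis .
      qed
      have b2: "\<bar>(\<integral>f. g (Lm m f) \<partial>P) - integral\<^sup>L P g\<bar> \<le> (\<integral>f. \<bar>g f - g (Lm m f)\<bar> \<partial>P)"
      proof -
        have "(\<integral>f. g (Lm m f) \<partial>P) - integral\<^sup>L P g = (\<integral>f. g (Lm m f) - g f \<partial>P)"
          using iPg iPL by simp
        also have "\<bar>\<dots>\<bar> \<le> (\<integral>f. \<bar>g (Lm m f) - g f\<bar> \<partial>P)"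
          by (rule integral_abs_bound)
        also have "\<dots> = (\<integral>f. \<bar>g f - g (Lm m f)\<bar> \<partial>P)"
          by (rule Bochner_Integration.integral_cong) (simp_all add: abs_minus_commute)
        finally show ?thesis .
      qed
      have b3: "\<bar>(\<integral>f. g (Lm m f) \<partial>Ps n) - (\<integral>f. g (Lm m f) \<partial>P)\<bar> < e" using N1[rule_format, of n] n by simp
      have b4: "(\<integral>f. E m (Y m f) \<partial>Ps n) < (\<integral>f. E m (Y m f) \<partial>P) + e" using N2[rule_format, of n] n by simp
      show ?thesis unfolding real_norm_def using b1 b2 b3 b4 a1 a2 unfolding e_def by (rule abs4)
    qed
    then show "\<exists>no. \<forall>n\<ge>no. norm (integral\<^sup>L (Ps n) g - integral\<^sup>L P g) < r" by blast
  qed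
qed

end



lemma lip_cont:
  fixes h :: "'a::metric_space \<Rightarrow> real"
  assumes hK: "\<And>x y. \<bar>h x - h y\<bar> \<le> K * dist x y" and K: "K \<ge> 0"
  shows "continuous_on UNIV h"
  unfolding continuous_on_iff
proof (intro ballI allI impI)
  fix x and e :: real assume e: "e > 0"
  show "\<exists>d>0. \<forall>x'\<in>UNIV. dist x' x < d \<longrightarrow> dist (h x') (h x) < e"
  proof (intro exI[of _ "e / (K + 1)"] conjI ballI impI)
    show "e / (K + 1) > 0" using e K by simp
    fix x' assume "dist x' x < e / (K + 1)"
    then have "(K + 1) * dist x' x < e" using K by (simp add: field_simps)
    moreover have "\<bar>h x' - h x\<bar> \<le> K * dist x' x" by (rule hK)
    moreover have "K * dist x' x \<le> (K + 1) * dist x' x" by (simp add: distrib_right)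
    ultimately show "dist (h x') (h x) < e" by (simp add: dist_real_def)
  qed
qed

context setup7 begin

lemma lower:
  fixes g :: "C01 \<Rightarrow> real"
  assumes gc: "continuous_on UNIV g" and gB: "\<And>x. \<bar>g x\<bar> \<le> B" and e: "e > 0"
  shows "\<exists>N. \<forall>n\<ge>N. integral\<^sup>L (Ps n) g > integral\<^sup>L P g - e"
proof -
  have B0: "B \<ge> 0" using gB[of undefined] by linarith
  define gk where "gk k x = (INF y. g y + real k * dist x y)" for k x
  have bdd: "bdd_below (range (\<lambda>y. g y + real k * dist x y))" for k x
  proof (rule bdd_belowI[where m="-B"])
    fix z assume "z \<in> range (\<lambda>y. g y + real k * dist x y)"
    then obtain y where "z = g y + real k * dist x y" by auto
    then show "-B \<le> z" using gB[of y] by (simp add: add_increasing2 abs_le_iff)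
  qed
  have gk_le: "gk k x \<le> g x" for k x
  proof -
    have "gk k x \<le> g x + real k * dist x x" unfolding gk_def by (rule cINF_lower[OF bdd]) simp
    then show ?thesis by simp
  qed
  have gk_ge: "gk k x \<ge> -B" for k x
    unfolding gk_def
  proof (rule cINF_greatest)
    fix y show "-B \<le> g y + real k * dist x y" using gB[of y] by (simp add: add_increasing2 abs_le_iff)
  qed simp
  have gkB: "\<bar>gk k x\<bar> \<le> B" for k x using gk_le[of k x] gk_ge[of k x] gB[of x] by auto
  have gk_lip1: "gk k x \<le> gk k x' + real k * dist x x'" for k x x'
  proof -
    have "gk k x - real k * dist x x' \<le> gk k x'"
      unfolding gk_def[of k x']
    proof (rule cINF_greatest)
      fix y
      have "gk k x \<le> g y + real k * dist x y" unfolding gk_def by (rule cINF_lower[OF bdd]) simp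
      also have "dist x y \<le> dist x x' + dist x' y" by (rule dist_triangle)
      then have "real k * dist x y \<le> real k * dist x x' + real k * dist x' y"
        by (metis distrib_left mult_left_mono of_nat_0_le_iff)
      finally show "gk k x - real k * dist x x' \<le> g y + real k * dist x' y" by simp
    qed simp
    then show ?thesis by simp
  qed
  have gk_lip: "\<bar>gk k x - gk k x'\<bar> \<le> real k * dist x x'" for k x x'
    using gk_lip1[of k x x'] gk_lip1[of k x' x] by (simp add: dist_commute abs_le_iff)
  have gkc: "continuous_on UNIV (gk k)" for k
    by (rule lip_cont[OF gk_lip]) simp
  have gk_conv: "(\<lambda>k. gk k x) \<longlonglongrightarrow> g x" for x
  proof (rule LIMSEQ_I)
    fix r :: real assume r: "r > 0"
    have r2: "r / 2 > 0" using r by simp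
    obtain d where d: "d > 0" "\<And>x'. dist x' x < d \<Longrightarrow> dist (g x') (g x) < r / 2"
      using gc r2 unfolding continuous_on_iff by blast
    obtain N :: nat where N: "real N > 2 * B / d" using reals_Archimedean2 by blast
    have "norm (gk k x - g x) < r" if k: "k \<ge> N" for k
    proof -
      have kd: "real k * d \<ge> 2 * B"
      proof -
        have "2 * B / d < real k" using N k by (meson of_nat_le_iff order_less_le_trans)
        then show ?thesis using d by (simp add: field_simps)
      qed
      have "g x - r / 2 \<le> gk k x" unfolding gk_def
      proof (rule cINF_greatest)
        fix y
        show "g x - r / 2 \<le> g y + real k * dist x y"
        proof (cases "dist y x < d")
          case True
          then have "\<bar>g y - g x\<bar> < r / 2" using d(2) by (simp add: dist_real_def)
          moreover have "0 \<le> real k * dist x y" by simp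
          ultimately show ?thesis by linarith
        next
          case False
          then have "real k * dist x y \<ge> real k * d" by (simp add: dist_commute mult_left_mono)
          then show ?thesis using kd gB[of x] gB[of y] r by (simp add: abs_le_iff)
        qed
      qed simp
      then show ?thesis using gk_le[of k x] r by simp
    qed
    then show "\<exists>no. \<forall>k\<ge>no. norm (gk k x - g x) < r" by blast
  qed
  have int_conv: "(\<lambda>k. integral\<^sup>L P (gk k)) \<longlonglongrightarrow> integral\<^sup>L P g"
  proof (rule integral_dominated_convergence[where w="\<lambda>_. B"])
    show "g \<in> borel_measurable P" by (rule measP[OF gc])
    show "gk k \<in> borel_measurable P" for k by (rule measP[OF gkc])
    show "integrable P (\<lambda>_. B)" using prob_space.finite_measure[OF P_prob]
      by (simp add: finite_measure.integrable_const)
    show "AE x in P. (\<lambda>k. gk k x) \<longlonglongrightarrow> g x" by (rule AE_I2) (rule gk_conv)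
    show "AE x in P. norm (gk k x) \<le> B" for k by (rule AE_I2) (simp add: gkB)
  qed
  have e2: "e / 2 > 0" using e by simp
  obtain k where k: "norm (integral\<^sup>L P (gk k) - integral\<^sup>L P g) < e / 2"
    using LIMSEQ_D[OF int_conv e2] by auto
  have "(\<lambda>n. integral\<^sup>L (Ps n) (gk k)) \<longlonglongrightarrow> integral\<^sup>L P (gk k)"
    by (rule lip_case[OF gkB gk_lip]) simp
  from LIMSEQ_D[OF this e2] obtain N where
    N: "\<forall>n\<ge>N. norm (integral\<^sup>L (Ps n) (gk k) - integral\<^sup>L P (gk k)) < e / 2" by auto
  have "integral\<^sup>L (Ps n) g > integral\<^sup>L P g - e" if n: "n \<ge> N" for n
  proof -
    have "integral\<^sup>L (Ps n) (gk k) \<le> integral\<^sup>L (Ps n) g"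
      by (rule integral_mono[OF intPs[OF gkc gkB] intPs[OF gc gB]]) (rule gk_le)
    moreover have "\<bar>integral\<^sup>L (Ps n) (gk k) - integral\<^sup>L P (gk k)\<bar> < e / 2"
      using N[rule_format, OF n] by simp
    moreover have "\<bar>integral\<^sup>L P (gk k) - integral\<^sup>L P g\<bar> < e / 2" using k by simp
    ultimately show ?thesis by linarith
  qed
  then show ?thesis by blast
qed

lemma main:
  fixes g :: "C01 \<Rightarrow> real"
  assumes gc: "continuous_on UNIV g" and bd: "bounded (range g)"
  shows "(\<lambda>n. integral\<^sup>L (Ps n) g) \<longlonglongrightarrow> integral\<^sup>L P g"
proof (rule LIMSEQ_I)
  fix r :: real assume r: "r > 0"
  obtain B where gB: "\<And>x. \<bar>g x\<bar> \<le> B" using bd unfolding bounded_iff by auto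
  obtain N1 where N1: "\<forall>n\<ge>N1. integral\<^sup>L (Ps n) g > integral\<^sup>L P g - r"
    using lower[OF gc gB r] by blast
  have gc': "continuous_on UNIV (\<lambda>x. - g x)" using gc by (intro continuous_intros)
  have gB': "\<bar>- g x\<bar> \<le> B" for x using gB[of x] by simp
  obtain N2 where N2: "\<forall>n\<ge>N2. integral\<^sup>L (Ps n) (\<lambda>x. - g x) > integral\<^sup>L P (\<lambda>x. - g x) - r"
    using lower[OF gc' gB' r] by blast
  have "norm (integral\<^sup>L (Ps n) g - integral\<^sup>L P g) < r" if n: "n \<ge> max N1 N2" for n
    using N1[rule_format, of n] N2[rule_format, of n] n by (simp add: abs_less_iff)
  then show "\<exists>no. \<forall>n\<ge>no. norm (integral\<^sup>L (Ps n) g - integral\<^sup>L P g) < r" by blast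
qed

end

theorem proposition7p6:
  fixes Ps :: "nat \<Rightarrow> C01 measure" and P :: "C01 measure"
  assumes "\<And>n. prob_space (Ps n)"
    and "\<And>n. sets (Ps n) = sets borel"
    and "prob_space P"
    and "sets P = sets borel"
    and "\<And>n. AE f in Ps n. convex_C01 f"
    and "\<And>k t. k \<ge> 1 \<Longrightarrow>
           weak_conv_seq (\<lambda>n. distr (Ps n) borel (fidi_proj k t)) (distr P borel (fidi_proj k t))"
  shows "weak_conv_seq Ps P"
proof -
  interpret setup7 Ps P using assms by (simp add: setup7_def)
  show ?thesis unfolding weak_conv_seq_def using main by blast
qed


end
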